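(* Let $m$ be a positive integer and let $h_c, h_r$ be independent random variables such that each of $|h_c|^2$ and $|h_r|^2$ has density $f(x)=\frac{m^m}{\Gamma(m)}x^{m-1}e^{-mx}$, $x>0$. Let $P_c,P_r,P_{BS},C_c,C_r,d_c,d_r,\alpha_c,\alpha_r,\beta_{semi},B,\sigma_\tau^2,\sigma^2,\gamma_{th}$ be positive constants and $\gamma^2=(2\pi)^2/12$. Put $\bar I = P_{BS}C_r d_r^{-\alpha_r}\gamma^2\beta_{semi}^2B^2\sigma_\tau^2$ and $$\gamma_c^I=\frac{P_c C_c d_c^{-\alpha_c}|h_c|^2}{P_r C_c d_r^{-\alpha_c}|h_r|^2+\bar I+\sigma^2}.$$ Define $a_1=\frac{P_{BS}C_r d_r^{-\alpha_r}\gamma^2\beta_{semi}^2B^2\sigma_\tau^2}{C_c d_c^{-\alpha_c}}$, $a_2=\frac{\sigma^2}{C_c d_c^{-\alpha_c}}$, $a_3=\frac{d_r^{-\alpha_c}}{d_c^{-\alpha_c}}$. Then $$\Pr\{\gamma_c^I<\gamma_{th}\} = 1-\exp\!\Big(-\frac{m\gamma_{th}}{P_c}(a_1+a_2)\Big)\sum_{p=0}^{m-1}\sum_{r=0}^{p}\frac{m^r\gamma_{th}^p\binom{p}{r}(P_ra_3)^{p-r}}{(m-1)!\,p!}\cdot\frac{(a_1+a_2)^r}{P_c^p}\,\Gamma(m+p-r)\Big(\frac{\gamma_{th}a_3P_r}{P_c}+1\Big)^{-(m+p-r)}.$$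
   Context: Setting: uplink NOMA-assisted semi-integrated sensing and communication. A base station (BS) receives, from a communication transmitter at distance $d_c$ with transmit power $P_c$, and from a radar target at distance $d_r$ with uplink transmit power $P_r$, communication signals through path loss $C_c d^{-\alpha_c}$ and small-scale power gains $|h_c|^2,|h_r|^2$ (Nakagami-$m$ with unit mean, independent); the radar echo interference (BS power $P_{BS}$, echo path loss $C_r d_r^{-\alpha_r}$, fraction $\beta_{semi}\in[0,1]$ of bandwidth $B$ used for sensing, time-delay variance $\sigma_\tau^2$) is replaced by its mean $\bar I$. $\sigma^2$ is the noise power and $\gamma_{th}$ the decoding threshold; $\gamma_c^I$ is the SINR of the communication transmitter, and $\Pr\{\gamma_c^I<\gamma_{th}\}$ is its outage probability. $\Gamma(\cdot)$ is the Gamma function and $\binom{p}{r}=p!/(r!(p-r)!)$. *)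

theory Defs
  imports "HOL-Probability.Probability"
begin

text \<open>Density of the power gain |h|^2 of a unit-mean Nakagami-m fading coefficient
  (Gamma distribution with shape m and rate m), zero for x \<le> 0.\<close>
definition nakagami_power_pdf :: "nat \<Rightarrow> real \<Rightarrow> real" where
  "nakagami_power_pdf m x =
     (if x > 0 then real m ^ m / Gamma (real m) * x ^ (m - 1) * exp (- real m * x) else 0)"

definition gamma_sq :: real where
  "gamma_sq = (2 * pi)\<^sup>2 / 12"

definition I_bar :: "real \<Rightarrow> real \<Rightarrow> real \<Rightarrow> real \<Rightarrow> real \<Rightarrow> real \<Rightarrow> real \<Rightarrow> real" where
  "I_bar P_BS C_r d_r alpha_r beta_semi B sigma_tau_sq =
     P_BS * C_r * d_r powr (- alpha_r) * gamma_sq * beta_semi\<^sup>2 * B\<^sup>2 * sigma_tau_sq"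

end

theory Submission
  imports Defs
begin

lemma erl_shift:
  fixes m :: nat and c y :: real
  assumes "m > 0" "c \<ge> 0"
  shows "erlang_density (m-1) (real m) y * exp (- c * y) =
         (real m / (real m + c)) ^ m * erlang_density (m-1) (real m + c) y"
proof (cases "y < 0")
  case True then show ?thesis by (simp add: erlang_density_def)
next
  case False
  have mm: "Suc (m-1) = m" using assms by simp
  have "exp (- real m * y) * exp (- c * y) = exp (- (real m + c) * y)"
    by (simp add: exp_add[symmetric] algebra_simps)
  moreover have "(real m / (real m + c)) ^ m * (real m + c) ^ m = real m ^ m"
    using assms by (simp add: power_divide)
  moreover have "real m + c > 0" using assms by simp
  ultimately show ?thesis using False unfolding erlang_density_def mm
    by (simp add: field_simps)
qed

lemma pointwise:
  fixes m p :: nat and u A b y :: real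
  assumes "m > 0" "u \<ge> 0" "b \<ge> 0"
  shows "erlang_density (m-1) (real m) y * (exp (- (real m * (u * (A + b * y)))) * (real m * (u * (A + b * y))) ^ p / fact p)
   = (\<Sum>r\<le>p. exp (- (real m * u * A)) * (real (p choose r) * (real m * u * A) ^ r * (real m * u * b) ^ (p - r)
        * (real m / (real m + real m * u * b)) ^ m / fact p) * (erlang_density (m-1) (real m + real m * u * b) y * y ^ (p - r)))"
   (is "_ = ?rhs")
proof -
  have c0: "real m * u * b \<ge> 0" using assms by simp
  have e: "exp (- (real m * (u * (A + b * y)))) = exp (- (real m * u * A)) * exp (- (real m * u * b) * y)"
    by (simp add: exp_add[symmetric] algebra_simps)
  have bin: "(real m * (u * (A + b * y))) ^ p = (\<Sum>r\<le>p. real (p choose r) * (real m * u * A) ^ r * ((real m * u * b) * y) ^ (p - r))"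
    using binomial_ring[of "real m * u * A" "real m * u * b * y" p]
    by (simp add: algebra_simps)
  have "erlang_density (m-1) (real m) y * (exp (- (real m * (u * (A + b * y)))) * (real m * (u * (A + b * y))) ^ p / fact p) = 
    exp (- (real m * u * A)) * ((real m / (real m + real m * u * b)) ^ m * erlang_density (m-1) (real m + real m * u * b) y) * (\<Sum>r\<le>p. real (p choose r) * (real m * u * A) ^ r * ((real m * u * b) * y) ^ (p - r)) / fact p"
    unfolding e bin erl_shift[OF assms(1) c0, of y, symmetric]
    by (simp add: algebra_simps)
  also have "... = ?rhs"
    unfolding sum_distrib_left sum_divide_distrib
    by (intro sum.cong refl) (simp add: power_mult_distrib field_simps)
  finally show ?thesis .
qed
lemma tail:
  fixes m :: nat and t :: real
  assumes "m > 0" "t \<ge> 0"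
  shows "emeasure (density lborel (\<lambda>x. ennreal (erlang_density (m-1) (real m) x))) {t..}
     = ennreal (\<Sum>p<m. exp (- (real m * t)) * (real m * t) ^ p / fact p)"
proof -
  define Dn where "Dn = density lborel (\<lambda>x. ennreal (erlang_density (m-1) (real m) x))"
  have l: "real m > 0" using assms by simp
  interpret prob_space Dn unfolding Dn_def by (rule prob_space_erlang_density[OF l])
  have sp: "space Dn = UNIV" by (simp add: Dn_def)
  have sD: "sets Dn = sets borel" by (simp add: Dn_def)
  have nt: "{t} \<in> null_sets Dn"
  proof -
    have "(\<lambda>x. ennreal (erlang_density (m-1) (real m) x)) \<in> borel_measurable lborel" by simp
    moreover have "AE x in lborel. x \<in> {t} \<longrightarrow> ennreal (erlang_density (m-1) (real m) x) = 0"
      using AE_lborel_singleton[of t] by (rule AE_mp) auto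
    ultimately show ?thesis unfolding Dn_def by (simp add: null_sets_density_iff)
  qed
  have "measure Dn {..t} = measure Dn ({..<t} \<union> {t})"
    by (intro arg_cong[where f="measure Dn"]) auto
  also have "... = measure Dn {..<t}"
    by (rule measure_Un_null_set) (auto simp: sD nt)
  finally have e1: "measure Dn {..t} = measure Dn {..<t}" .
  have "measure Dn {t..} = 1 - measure Dn {..<t}"
  proof -
    have "UNIV - {..<t} = {t..}" by auto
    then show ?thesis using prob_compl[of "{..<t}"] sp sD by auto
  qed
  also have "... = 1 - erlang_CDF (m-1) (real m) t"
    using e1 emeasure_erlang_density[OF l, of "m-1" t] emeasure_eq_measure[of "{..t}"]
    unfolding Dn_def by (simp add: ennreal_inj erlang_CDF_nonneg[OF l])
  also have "... = (\<Sum>p<m. exp (- (real m * t)) * (real m * t) ^ p / fact p)"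
  proof -
    have "{..m-1} = {..<m}" using assms by auto
    then show ?thesis using assms unfolding erlang_CDF_def by (simp add: algebra_simps)
  qed
  finally show ?thesis using emeasure_eq_measure[of "{t..}"] unfolding Dn_def by simp
qed
lemma term_eq:
  fixes m p r :: nat and u A b g Pc C :: real
  assumes m: "m > 0" and rp: "r \<le> p" and Pc: "Pc > 0" and u: "u = g / Pc" and ub: "u * b \<ge> 0"
  shows "exp (- (real m * u * A)) * (C * (real m * u * A) ^ r * (real m * u * b) ^ (p - r)
        * (real m / (real m + real m * u * b)) ^ m / fact p) * (fact (m - 1 + (p - r)) / (fact (m - 1) * (real m + real m * u * b) ^ (p - r)))
   = exp (- (real m * g / Pc) * A) * ((real m ^ r * g ^ p * C * b ^ (p - r)) / (fact (m - 1) * fact p)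
       * (A ^ r / Pc ^ p) * Gamma (real (m + p - r)) * (u * b + 1) powr (- real (m + p - r)))"
proof -
  define q where "q = u * b + 1"
  have q: "q > 0" using ub by (simp add: q_def)
  have L: "real m + real m * u * b = real m * q" by (simp add: q_def algebra_simps)
  have G: "Gamma (real (m + p - r)) = fact (m - 1 + (p - r))"
  proof -
    have "real (m + p - r) = 1 + of_nat (m - 1 + (p - r))" using m rp by simp
    then have "Gamma (real (m + p - r)) = Gamma (1 + of_nat (m - 1 + (p - r)))" by metis
    then show ?thesis using Gamma_fact by metis
  qed
  have P: "q powr (- real (m + p - r)) = 1 / (q ^ m * q ^ (p - r))"
  proof -
    have "q powr (- real (m + p - r)) = inverse (q powr real (m + p - r))" by (rule powr_minus)
    also have "... = inverse (q ^ (m + p - r))" using q by (simp only: powr_realpow)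
    also have "q ^ (m + p - r) = q ^ m * q ^ (p - r)" using rp by (simp add: power_add[symmetric])
    finally show ?thesis by (simp add: divide_inverse)
  qed
  have E: "exp (- (real m * g / Pc) * A) = exp (- (real m * u * A))" by (simp add: u)
  have U: "u ^ r * u ^ (p - r) = g ^ p / Pc ^ p"
    using rp by (simp add: u power_add[symmetric] power_divide)
  have mm: "real m / (real m * q) = 1 / q" using m q by simp
  show ?thesis
    unfolding L G P E mm q_def[symmetric]
    using m q Pc U
    by (simp add: power_mult_distrib power_divide field_simps)
qed
theorem theorem1:
  fixes M :: "'w measure"
    and X Y :: "'w \<Rightarrow> real"   (* X = |h_c|^2, Y = |h_r|^2 *)
    and m :: nat
    and P_c P_r P_BS C_c C_r d_c d_r alpha_c alpha_r beta_semi B sigma_tau_sq sigma_sq gamma_th :: real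
  assumes "prob_space M"
    and "m > 0"
    and "distributed M lborel X (\<lambda>x. ennreal (nakagami_power_pdf m x))"
    and "distributed M lborel Y (\<lambda>x. ennreal (nakagami_power_pdf m x))"
    and "prob_space.indep_var M borel X borel Y"
    and "P_c > 0" "P_r > 0" "P_BS > 0" "C_c > 0" "C_r > 0" "d_c > 0" "d_r > 0"
        "alpha_c > 0" "alpha_r > 0" "beta_semi > 0" "B > 0" "sigma_tau_sq > 0"
        "sigma_sq > 0" "gamma_th > 0"
  shows
    "let Ib = I_bar P_BS C_r d_r alpha_r beta_semi B sigma_tau_sq;
         gamma_cI = (\<lambda>w. P_c * C_c * d_c powr (- alpha_c) * X w /
                         (P_r * C_c * d_r powr (- alpha_c) * Y w + Ib + sigma_sq));
         a1 = P_BS * C_r * d_r powr (- alpha_r) * gamma_sq * beta_semi\<^sup>2 * B\<^sup>2 * sigma_tau_sq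
                / (C_c * d_c powr (- alpha_c));
         a2 = sigma_sq / (C_c * d_c powr (- alpha_c));
         a3 = d_r powr (- alpha_c) / d_c powr (- alpha_c)
     in measure M {w \<in> space M. gamma_cI w < gamma_th} =
        1 - exp (- (real m * gamma_th / P_c) * (a1 + a2)) *
          (\<Sum>p = 0..m - 1. \<Sum>r = 0..p.
             (real m ^ r * gamma_th ^ p * real (p choose r) * (P_r * a3) ^ (p - r))
               / (fact (m - 1) * fact p)
             * ((a1 + a2) ^ r / P_c ^ p)
             * Gamma (real (m + p - r))
             * (gamma_th * a3 * P_r / P_c + 1) powr (- real (m + p - r)))"
proof -
  interpret M: prob_space M by (rule assms(1))
  have m: "m > 0" by (rule assms(2))
  define Dn where "Dn = density lborel (\<lambda>x. ennreal (erlang_density (m-1) (real m) x))"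
  have l: "real m > 0" using m by simp
  interpret D: prob_space Dn unfolding Dn_def by (rule prob_space_erlang_density[OF l])
  interpret DD: pair_prob_space Dn Dn ..
  have sD: "sets Dn = sets borel" by (simp add: Dn_def)
  have fD: "density lborel (\<lambda>x. ennreal (nakagami_power_pdf m x)) = Dn"
    unfolding Dn_def
  proof (rule density_cong)
    show "(\<lambda>x. ennreal (nakagami_power_pdf m x)) \<in> borel_measurable lborel"
      unfolding nakagami_power_pdf_def by measurable
    show "(\<lambda>x. ennreal (erlang_density (m-1) (real m) x)) \<in> borel_measurable lborel" by simp
    have G: "Gamma (real m) = fact (m - 1)"
    proof -
      have "real m = 1 + of_nat (m - 1)" using m by simp
      then show ?thesis using Gamma_fact by metis
    qed
    have mm: "Suc (m - 1) = m" using m by simp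
    have pm: "real m ^ m = real m * real m ^ (m-1)" by (metis mm power_Suc)
    show "AE x in lborel. ennreal (nakagami_power_pdf m x) = ennreal (erlang_density (m-1) (real m) x)"
      using AE_lborel_singleton[of 0]
      by (rule AE_mp) (auto intro!: AE_I2 simp: nakagami_power_pdf_def erlang_density_def G mm pm)
  qed
  have dX: "distr M borel X = Dn"
  proof -
    have "distr M borel X = distr M lborel X" by (rule distr_cong) auto
    then show ?thesis using assms(3) fD unfolding distributed_def by simp
  qed
  have dY: "distr M borel Y = Dn"
  proof -
    have "distr M borel Y = distr M lborel Y" by (rule distr_cong) auto
    then show ?thesis using assms(4) fD unfolding distributed_def by simp
  qed
  have Xm[measurable]: "X \<in> borel_measurable M" using assms(3) unfolding distributed_def by simp
  have Ym[measurable]: "Y \<in> borel_measurable M" using assms(4) unfolding distributed_def by simp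
  have joint: "distr M (borel \<Otimes>\<^sub>M borel) (\<lambda>w. (X w, Y w)) = Dn \<Otimes>\<^sub>M Dn"
    using assms(5) unfolding M.indep_var_distribution_eq dX dY by simp

  define K where "K = C_c * d_c powr (- alpha_c)"
  define Ib where "Ib = I_bar P_BS C_r d_r alpha_r beta_semi B sigma_tau_sq"
  define a1 where "a1 = P_BS * C_r * d_r powr (- alpha_r) * gamma_sq * beta_semi\<^sup>2 * B\<^sup>2 * sigma_tau_sq / (C_c * d_c powr (- alpha_c))"
  define a2 where "a2 = sigma_sq / (C_c * d_c powr (- alpha_c))"
  define a3 where "a3 = d_r powr (- alpha_c) / d_c powr (- alpha_c)"
  define u where "u = gamma_th / P_c"
  define A where "A = a1 + a2"
  define b where "b = P_r * a3"
  define L where "L = real m + real m * u * b"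
  define gc where "gc = (\<lambda>x y. P_c * C_c * d_c powr (- alpha_c) * x / (P_r * C_c * d_r powr (- alpha_c) * y + Ib + sigma_sq))"
  have K: "K > 0" using assms by (simp add: K_def)
  have Ibpos: "Ib \<ge> 0" using assms by (simp add: Ib_def I_bar_def gamma_sq_def)
  have u0: "u \<ge> 0" using assms by (simp add: u_def)
  have b0: "b \<ge> 0" using assms by (simp add: b_def a3_def)
  have A0: "A \<ge> 0" using assms by (simp add: A_def a1_def a2_def gamma_sq_def)
  have L0: "L > 0" using l u0 b0 unfolding L_def by (simp add: add_pos_nonneg)
  have Aeq: "A = (Ib + sigma_sq) / K"
    by (simp add: A_def a1_def a2_def Ib_def I_bar_def K_def add_divide_distrib)
  have beq: "b = P_r * C_c * d_r powr (- alpha_c) / K"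
    using assms by (simp add: b_def a3_def K_def)

  define S where "S = {z \<in> space (borel \<Otimes>\<^sub>M borel). gamma_th \<le> gc (fst z) (snd z)}"
  have S[measurable]: "S \<in> sets (borel \<Otimes>\<^sub>M borel)"
    unfolding S_def gc_def by measurable
  have SD: "S \<in> sets (Dn \<Otimes>\<^sub>M Dn)"
    using S by (simp add: sets_pair_measure_cong[OF sD sD])

  have slice: "(\<lambda>x. (x, y)) -` S = {u * (A + b * y) ..}" if y: "y \<ge> 0" for y
  proof -
    have den: "P_r * C_c * d_r powr (- alpha_c) * y + Ib + sigma_sq > 0"
      using assms y Ibpos by (intro add_nonneg_pos) (auto intro!: add_nonneg_nonneg)
    have eq: "u * (A + b * y) = gamma_th * (P_r * C_c * d_r powr (- alpha_c) * y + Ib + sigma_sq) / (P_c * K)"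
      unfolding Aeq beq u_def using K assms(6) by (simp add: field_simps)
    have "gamma_th \<le> gc x y \<longleftrightarrow> u * (A + b * y) \<le> x" for x
    proof -
      define D where "D = P_r * C_c * d_r powr (- alpha_c) * y + Ib + sigma_sq"
      have D: "D > 0" using den by (simp add: D_def)
      have PK: "P_c * K > 0" using K assms(6) by simp
      have g: "gc x y = (P_c * K * x) / D" by (simp add: gc_def D_def K_def mult.assoc)
      have "gamma_th \<le> gc x y \<longleftrightarrow> gamma_th * D \<le> P_c * K * x"
        unfolding g using D by (simp add: pos_le_divide_eq)
      also have "... \<longleftrightarrow> gamma_th * D / (P_c * K) \<le> x"
        using PK by (simp add: pos_divide_le_eq mult.commute)
      finally show ?thesis unfolding eq D_def .
    qed
    then show ?thesis by (auto simp: S_def space_pair_measure)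
  qed

  define H where "H = (\<lambda>y. (\<Sum>p<m. exp (- (real m * (u * (A + b * y)))) * (real m * (u * (A + b * y))) ^ p / fact p))"
  define coef where "coef = (\<lambda>p r. exp (- (real m * u * A)) * (real (p choose r) * (real m * u * A) ^ r * (real m * u * b) ^ (p - r)
        * (real m / (real m + real m * u * b)) ^ m / fact p))"
  have coef0: "coef p r \<ge> 0" for p r using u0 b0 A0 l by (simp add: coef_def)

  have "emeasure (Dn \<Otimes>\<^sub>M Dn) S = (\<integral>\<^sup>+y. emeasure Dn ((\<lambda>x. (x, y)) -` S) \<partial>Dn)"
    by (rule DD.emeasure_pair_measure_alt2[OF SD])
  also have "... = (\<integral>\<^sup>+y. ennreal (H y) \<partial>Dn)"
  proof (rule nn_integral_cong_AE)
    have "AE y in Dn. y \<ge> 0"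
      unfolding Dn_def by (subst AE_density) (auto simp: erlang_density_def)
    then show "AE y in Dn. emeasure Dn ((\<lambda>x. (x, y)) -` S) = ennreal (H y)"
    proof (rule AE_mp, intro AE_I2 impI)
      fix y :: real assume y: "y \<ge> 0"
      have "u * (A + b * y) \<ge> 0" using u0 A0 b0 y by simp
      then show "emeasure Dn ((\<lambda>x. (x, y)) -` S) = ennreal (H y)"
        unfolding slice[OF y] H_def Dn_def using tail[OF m] by simp
    qed
  qed
  also have "... = (\<integral>\<^sup>+y. ennreal (erlang_density (m-1) (real m) y) * ennreal (H y) \<partial>lborel)"
    unfolding Dn_def by (subst nn_integral_density) (auto simp: H_def)
  also have "... = (\<integral>\<^sup>+y. (\<Sum>p<m. \<Sum>r\<le>p. ennreal (coef p r) * ennreal (erlang_density (m-1) L y * y ^ (p - r))) \<partial>lborel)"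
  proof (rule nn_integral_cong_AE)
    show "AE y in lborel. ennreal (erlang_density (m-1) (real m) y) * ennreal (H y) =
       (\<Sum>p<m. \<Sum>r\<le>p. ennreal (coef p r) * ennreal (erlang_density (m-1) L y * y ^ (p - r)))"
    proof (rule AE_I2)
      fix y :: real
      have e0: "erlang_density (m-1) L y * y ^ (p - r) \<ge> 0" for p r
        using L0 by (auto simp: erlang_density_def)
      have "ennreal (erlang_density (m-1) (real m) y) * ennreal (H y) = ennreal (erlang_density (m-1) (real m) y * H y)"
        using l by (simp add: ennreal_mult')
      also have "erlang_density (m-1) (real m) y * H y = (\<Sum>p<m. \<Sum>r\<le>p. coef p r * (erlang_density (m-1) L y * y ^ (p - r)))"
        unfolding H_def sum_distrib_left coef_def L_def
        using pointwise[OF m u0 b0] by (intro sum.cong refl) simp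
      also have "ennreal ... = (\<Sum>p<m. \<Sum>r\<le>p. ennreal (coef p r) * ennreal (erlang_density (m-1) L y * y ^ (p - r)))"
      proof -
        have nn: "0 \<le> coef p r * (erlang_density (m-1) L y * y ^ (p - r))" for p r
          using coef0 e0 by simp
        have "ennreal (\<Sum>p<m. \<Sum>r\<le>p. coef p r * (erlang_density (m-1) L y * y ^ (p - r)))
           = (\<Sum>p<m. ennreal (\<Sum>r\<le>p. coef p r * (erlang_density (m-1) L y * y ^ (p - r))))"
          using nn by (subst sum_ennreal) (auto intro: sum_nonneg)
        also have "... = (\<Sum>p<m. \<Sum>r\<le>p. ennreal (coef p r * (erlang_density (m-1) L y * y ^ (p - r))))"
          using nn by (intro sum.cong refl) (subst sum_ennreal; auto)
        also have "... = (\<Sum>p<m. \<Sum>r\<le>p. ennreal (coef p r) * ennreal (erlang_density (m-1) L y * y ^ (p - r)))"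
          using coef0 e0 by (intro sum.cong refl) (simp add: ennreal_mult)
        finally show ?thesis .
      qed
      finally show "ennreal (erlang_density (m-1) (real m) y) * ennreal (H y) =
       (\<Sum>p<m. \<Sum>r\<le>p. ennreal (coef p r) * ennreal (erlang_density (m-1) L y * y ^ (p - r)))" .
    qed
  qed
  also have "... = (\<Sum>p<m. \<Sum>r\<le>p. ennreal (coef p r) * (\<integral>\<^sup>+y. ennreal (erlang_density (m-1) L y * y ^ (p - r)) \<partial>lborel))"
    by (simp add: nn_integral_sum nn_integral_cmult)
  also have "... = ennreal (\<Sum>p<m. \<Sum>r\<le>p. coef p r * (fact (m - 1 + (p - r)) / (fact (m - 1) * L ^ (p - r))))"
  proof -
    define F where "F = (\<lambda>p r. coef p r * (fact (m - 1 + (p - r)) / (fact (m - 1) * L ^ (p - r))))"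
    have nn: "0 \<le> F p r" for p r
      using L0 coef0 by (simp add: F_def)
    have "ennreal (\<Sum>p<m. \<Sum>r\<le>p. F p r) = (\<Sum>p<m. ennreal (\<Sum>r\<le>p. F p r))"
      using nn by (subst sum_ennreal) (auto intro: sum_nonneg)
    also have "... = (\<Sum>p<m. \<Sum>r\<le>p. ennreal (F p r))"
      using nn by (intro sum.cong refl) (subst sum_ennreal; auto)
    also have "... = (\<Sum>p<m. \<Sum>r\<le>p. ennreal (coef p r) * (\<integral>\<^sup>+y. ennreal (erlang_density (m-1) L y * y ^ (p - r)) \<partial>lborel))"
    proof -
      have "ennreal (F p r) = ennreal (coef p r) * (\<integral>\<^sup>+y. ennreal (erlang_density (m-1) L y * y ^ (p - r)) \<partial>lborel)" for p r
        unfolding F_def nn_integral_erlang_ith_moment[OF L0] by (rule ennreal_mult'[OF coef0])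
      then show ?thesis by simp
    qed
    finally show ?thesis unfolding F_def by simp
  qed
  finally have em: "emeasure (Dn \<Otimes>\<^sub>M Dn) S = ennreal (\<Sum>p<m. \<Sum>r\<le>p. coef p r * (fact (m - 1 + (p - r)) / (fact (m - 1) * L ^ (p - r))))" .

  define V where "V = (\<Sum>p<m. \<Sum>r\<le>p. coef p r * (fact (m - 1 + (p - r)) / (fact (m - 1) * L ^ (p - r))))"
  have V0: "V \<ge> 0" unfolding V_def using coef0 L0 by (intro sum_nonneg mult_nonneg_nonneg) auto

  define E where "E = {w \<in> space M. gamma_th \<le> gc (X w) (Y w)}"
  have E[measurable]: "E \<in> sets M" unfolding E_def gc_def by measurable
  have "measure M E = measure (distr M (borel \<Otimes>\<^sub>M borel) (\<lambda>w. (X w, Y w))) S"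
  proof -
    have pre: "(\<lambda>w. (X w, Y w)) -` S \<inter> space M = E" by (auto simp: E_def S_def space_pair_measure)
    have "(\<lambda>w. (X w, Y w)) \<in> measurable M (borel \<Otimes>\<^sub>M borel)" by measurable
    then show ?thesis using measure_distr[of "\<lambda>w. (X w, Y w)" M "borel \<Otimes>\<^sub>M borel" S] S pre by simp
  qed
  also have "... = V" unfolding joint using em V0 by (simp add: measure_def V_def)
  finally have mE: "measure M E = V" .
  have compl: "{w \<in> space M. gc (X w) (Y w) < gamma_th} = space M - E"
    by (auto simp: E_def)
  have main: "measure M {w \<in> space M. gc (X w) (Y w) < gamma_th} = 1 - V"
    unfolding compl using M.prob_compl[OF E] mE by simp

  have fin: "V = exp (- (real m * gamma_th / P_c) * (a1 + a2)) *
          (\<Sum>p = 0..m - 1. \<Sum>r = 0..p.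
             (real m ^ r * gamma_th ^ p * real (p choose r) * (P_r * a3) ^ (p - r))
               / (fact (m - 1) * fact p)
             * ((a1 + a2) ^ r / P_c ^ p)
             * Gamma (real (m + p - r))
             * (gamma_th * a3 * P_r / P_c + 1) powr (- real (m + p - r)))"
  proof -
    have r1: "{..m-1} = {..<m}" using m by auto
    have r2: "{0..p} = {..p}" for p :: nat by auto
    have q: "gamma_th * a3 * P_r / P_c = u * b" by (simp add: u_def b_def)
    show ?thesis
      unfolding r2 r1 V_def sum_distrib_left A_def[symmetric] b_def[symmetric] q
      apply (intro sum.cong refl)
      apply (unfold coef_def L_def)
      apply (rule term_eq[OF m _ assms(6) u_def])
      using u0 b0 by simp_all
  qed
  show ?thesis
  proof -
    have gf: "measure M {w \<in> space M. P_c * C_c * d_c powr (- alpha_c) * X w / (P_r * C_c * d_r powr (- alpha_c) * Y w + Ib + sigma_sq) < gamma_th} =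
        1 - exp (- (real m * gamma_th / P_c) * (a1 + a2)) *
          (\<Sum>p = 0..m - 1. \<Sum>r = 0..p.
             (real m ^ r * gamma_th ^ p * real (p choose r) * (P_r * a3) ^ (p - r))
               / (fact (m - 1) * fact p)
             * ((a1 + a2) ^ r / P_c ^ p)
             * Gamma (real (m + p - r))
             * (gamma_th * a3 * P_r / P_c + 1) powr (- real (m + p - r)))"
      using main unfolding fin gc_def .
    show ?thesis using gf by (simp only: Let_def a1_def a2_def a3_def Ib_def)
  qed
qed

end
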